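(* Suppose that the limit $c_1:=\lim_{n\to\infty}E_n(F_1(n))/n$ exists and $c_1\in(0,1)$. Then for every sequence of positive numbers $(\lambda_n)_{n\ge1}$ with $\lambda_n/n\to1$, $$\lim_{L\to\infty}\limsup_{n\to\infty}\frac1n\sum_{k\in M_n^{Lc}}\big(\lambda_n p_{kn}+(\lambda_n p_{kn})^2\big)e^{-\lambda_n p_{kn}}=0,$$ where $M_n^{Lc}=\{k\ge1: np_{kn}>L\}$. In particular, for every such sequence $(\lambda_n)$ and every $\varepsilon>0$, $$\lim_{n\to\infty}\frac{1}{s_n^2}\sum_{k=1}^\infty(\lambda_n p_{kn})^2e^{-\lambda_n p_{kn}}\,I_{\{\lambda_n p_{kn}>\varepsilon s_n^2/a(s_n^2)\}}=0.$$
   Context: For each $n\ge1$, $P_n$ is a probability measure (expectation $E_n$) and $p_n=(p_{kn})_{k\ge1}$ is a probability vector. Under $P_n$ a sample of size $n$ is drawn i.i.d. from countably many species, species $k$ with probability $p_{kn}$; $X_k(n)$ is the number of times species $k$ appears, and $F_1(n)=\#\{k: X_k(n)=1\}$. For $\lambda>0$, $s_{\lambda n}^2=\sum_{k\ge1}\big(\lambda p_{kn}+(\lambda p_{kn})^2\big)e^{-\lambda p_{kn}}$ and $s_n^2=s_{nn}^2$. The function $a:[0,\infty)\to[1,\infty)$ satisfies $a(t)/\sqrt t\to\infty$ and $a(t)/t\to0$ as $t\to\infty$. *)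

theory Defs
  imports "HOL-Probability.Probability"
begin

text \<open>Species are indexed by natural numbers; p n k is the probability p_{kn} of species k
  in the n-th model.\<close>

definition species_pmf :: "(nat \<Rightarrow> nat \<Rightarrow> real) \<Rightarrow> nat \<Rightarrow> nat pmf" where
  "species_pmf p n = embed_pmf (\<lambda>k. p n k)"

definition sample_pmf :: "(nat \<Rightarrow> nat \<Rightarrow> real) \<Rightarrow> nat \<Rightarrow> (nat \<Rightarrow> nat) pmf" where
  "sample_pmf p n = Pi_pmf {..<n} 0 (\<lambda>_. species_pmf p n)"

definition Xcount :: "nat \<Rightarrow> (nat \<Rightarrow> nat) \<Rightarrow> nat \<Rightarrow> nat" where
  "Xcount n \<omega> k = card {i \<in> {..<n}. \<omega> i = k}"

definition F1 :: "nat \<Rightarrow> (nat \<Rightarrow> nat) \<Rightarrow> nat" where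
  "F1 n \<omega> = card {k. Xcount n \<omega> k = 1}"

definition EF1 :: "(nat \<Rightarrow> nat \<Rightarrow> real) \<Rightarrow> nat \<Rightarrow> real" where
  "EF1 p n = measure_pmf.expectation (sample_pmf p n) (\<lambda>\<omega>. real (F1 n \<omega>))"

definition s2 :: "(nat \<Rightarrow> nat \<Rightarrow> real) \<Rightarrow> real \<Rightarrow> nat \<Rightarrow> real" where
  "s2 p lam n = (\<Sum>\<^sub>\<infinity>k. (lam * p n k + (lam * p n k)^2) * exp (- lam * p n k))"

definition sn2 :: "(nat \<Rightarrow> nat \<Rightarrow> real) \<Rightarrow> nat \<Rightarrow> real" where
  "sn2 p n = s2 p (real n) n"

end

theory Submission imports Defs begin
lemma pmf_species:
  assumes nonneg: "\<And>k. p n k \<ge> 0" and sm: "(\<lambda>k. p n k) sums 1"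
  shows "pmf (species_pmf p n) k = p n k"
proof -
  have "(\<integral>\<^sup>+x. ennreal (p n x) \<partial>count_space UNIV) = (\<Sum>x. ennreal (p n x))"
    by (simp add: nn_integral_count_space_nat)
  also have "\<dots> = ennreal (\<Sum>x. p n x)"
    using sm nonneg by (intro suminf_ennreal2) (auto simp: sums_iff)
  also have "(\<Sum>x. p n x) = 1" using sm by (simp add: sums_iff)
  finally show ?thesis unfolding species_pmf_def
    by (subst pmf_embed_pmf) (use nonneg in auto)
qed

lemma prob_unique:
  assumes nonneg: "\<And>k. p n k \<ge> 0" and sm: "(\<lambda>k. p n k) sums 1" and i: "i < n"
  shows "emeasure (sample_pmf p n) {\<omega>. \<forall>j<n. j\<noteq>i \<longrightarrow> \<omega> j \<noteq> \<omega> i}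
     = (\<integral>\<^sup>+ y. ennreal ((1 - p n y)^(n-1)) \<partial>species_pmf p n)"
proof -
  define q where "q = species_pmf p n"
  define A where "A = {..<n} - {i}"
  have fA: "finite A" "i \<notin> A" and ins: "{..<n} = insert i A" using i by (auto simp: A_def)
  have cA: "card A = n - 1" using i by (simp add: A_def)
  let ?S = "{\<omega>. \<forall>j<n. j\<noteq>i \<longrightarrow> \<omega> j \<noteq> \<omega> i}"
  have "sample_pmf p n = do {y \<leftarrow> q; f \<leftarrow> Pi_pmf A 0 (\<lambda>_. q); return_pmf (f(i := y))}"
    unfolding sample_pmf_def ins q_def by (rule Pi_pmf_insert'[OF fA])
  then have "emeasure (sample_pmf p n) ?S =
     (\<integral>\<^sup>+ y. \<integral>\<^sup>+ f. indicator ?S (f(i:=y)) \<partial>Pi_pmf A 0 (\<lambda>_. q) \<partial>q)"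
    by simp
  also have "\<dots> = (\<integral>\<^sup>+ y. \<integral>\<^sup>+ f. indicator (Pi A (\<lambda>_. - {y})) f \<partial>Pi_pmf A 0 (\<lambda>_. q) \<partial>q)"
  proof (intro nn_integral_cong)
    fix y :: nat and f :: "nat \<Rightarrow> nat"
    have "(f(i:=y) \<in> ?S) = (f \<in> Pi A (\<lambda>_. - {y}))" by (auto simp: A_def Pi_def)
    then show "indicator ?S (f(i:=y)) = (indicator (Pi A (\<lambda>_. - {y})) f :: ennreal)"
      by (simp add: indicator_def)
  qed
  also have "\<dots> = (\<integral>\<^sup>+ y. ennreal ((1 - p n y)^(n-1)) \<partial>q)"
  proof (intro nn_integral_cong)
    fix y
    have pc: "measure_pmf.prob q (- {y}) = 1 - p n y"
      using measure_pmf.prob_compl[of "{y}" q]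
      by (simp add: Compl_eq_Diff_UNIV measure_pmf_single q_def pmf_species[of p n, OF nonneg sm])
    have "(\<integral>\<^sup>+ f. indicator (Pi A (\<lambda>_. - {y})) f \<partial>Pi_pmf A 0 (\<lambda>_. q))
       = emeasure (Pi_pmf A 0 (\<lambda>_. q)) (Pi A (\<lambda>_. - {y}))" by simp
    also have "\<dots> = ennreal (measure_pmf.prob (Pi_pmf A 0 (\<lambda>_. q)) (Pi A (\<lambda>_. - {y})))"
      by (simp add: measure_pmf.emeasure_eq_measure)
    also have "measure_pmf.prob (Pi_pmf A 0 (\<lambda>_. q)) (Pi A (\<lambda>_. - {y})) = (1 - p n y)^(n-1)"
      using fA cA pc by (simp add: measure_Pi_pmf_Pi measure_pmf.prob_compl measure_pmf_single
           q_def pmf_species[of p n, OF nonneg sm])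
    finally show "(\<integral>\<^sup>+ f. indicator (Pi A (\<lambda>_. - {y})) f \<partial>Pi_pmf A 0 (\<lambda>_. q)) = ennreal ((1 - p n y)^(n-1))" .
  qed
  finally show ?thesis by (simp add: q_def)
qed


lemma p_le1:
  assumes nonneg: "\<And>k. p n k \<ge> (0::real)" and sm: "(\<lambda>k. p n k) sums 1"
  shows "p n k \<le> 1"
proof -
  have "sum (p n) {k} \<le> suminf (p n)"
    using sm nonneg by (intro sum_le_suminf) (auto simp: sums_iff)
  then show ?thesis using sm by (simp add: sums_iff)
qed

lemma p_summable:
  assumes nonneg: "\<And>k. p n k \<ge> (0::real)" and sm: "(\<lambda>k. p n k) sums 1"
  shows "(\<lambda>k. p n k) summable_on UNIV" "infsum (\<lambda>k. p n k) UNIV = 1"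
proof -
  have h: "((\<lambda>k. p n k) has_sum 1) UNIV" by (rule sums_nonneg_imp_has_sum[OF sm nonneg])
  then show "(\<lambda>k. p n k) summable_on UNIV" by (auto simp: summable_on_def)
  show "infsum (\<lambda>k. p n k) UNIV = 1" using h by (rule infsumI)
qed

lemma dom_summable:
  assumes nonneg: "\<And>k. p n k \<ge> (0::real)" and sm: "(\<lambda>k. p n k) sums 1"
    and f: "\<And>k. 0 \<le> f k" "\<And>k. f k \<le> C * p n k"
  shows "f summable_on B"
proof -
  have "(\<lambda>k. C * p n k) summable_on UNIV"
    by (intro summable_on_cmult_right p_summable[of p n, OF nonneg sm])
  then have "f summable_on UNIV" by (rule summable_on_comparison_test) (use f in auto)
  then show ?thesis by (rule summable_on_subset_banach) auto
qed

lemma prob_unique_le: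
  assumes nonneg: "\<And>k. p n k \<ge> 0" and sm: "(\<lambda>k. p n k) sums 1" and i: "i < n"
  shows "measure_pmf.prob (sample_pmf p n) {\<omega>. \<forall>j<n. j\<noteq>i \<longrightarrow> \<omega> j \<noteq> \<omega> i}
     \<le> exp 1 * (\<Sum>\<^sub>\<infinity>k. p n k * exp (- real n * p n k))"
proof -
  define g where "g k = exp 1 * exp (- real n * p n k)" for k
  have pw: "(1 - p n y)^(n-1) \<le> g y" for y
  proof -
    have p1: "p n y \<le> 1" "0 \<le> p n y" using p_le1[of p n, OF nonneg sm] nonneg by auto
    have "(1 - p n y)^(n-1) \<le> exp (- p n y) ^ (n-1)"
      by (intro power_mono) (use p1 exp_ge_add_one_self[of "- p n y"] in auto)
    also have "\<dots> = exp (real (n-1) * (- p n y))" by (rule exp_of_nat_mult[symmetric])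
    also have "\<dots> \<le> g y"
    proof (cases "n = 0")
      case True then show ?thesis by (simp add: g_def)
    next
      case False
      then have "real (n-1) * (- p n y) = p n y + (- real n * p n y)" by (simp add: of_nat_diff algebra_simps)
      then have "exp (real (n-1) * (- p n y)) = exp (p n y + (- real n * p n y))" by (rule arg_cong[where f=exp])
      also have "\<dots> = exp (p n y) * exp (- real n * p n y)" by (rule exp_add)
      also have "\<dots> \<le> g y" unfolding g_def using p1 by (intro mult_right_mono) auto
      finally show ?thesis .
    qed
    finally show ?thesis .
  qed
  have gs: "(\<lambda>k. p n k * g k) sums (\<Sum>\<^sub>\<infinity>k. p n k * g k)"
  proof -
    have "(\<lambda>k. p n k * g k) summable_on UNIV"
    proof (rule dom_summable[of p n, OF nonneg sm, where C="exp 1"])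
      fix k
      show "0 \<le> p n k * g k" using nonneg by (simp add: g_def)
      have "exp (- real n * p n k) \<le> 1" using nonneg by simp
      have "p n k * g k = (exp 1 * p n k) * exp (- real n * p n k)" by (simp add: g_def)
      also have "\<dots> \<le> (exp 1 * p n k) * 1"
        by (rule mult_left_mono) (use nonneg \<open>exp (- real n * p n k) \<le> 1\<close> in auto)
      finally show "p n k * g k \<le> exp 1 * p n k" by simp
    qed
    then show ?thesis using has_sum_imp_sums has_sum_infsum by blast
  qed
  have "emeasure (sample_pmf p n) {\<omega>. \<forall>j<n. j\<noteq>i \<longrightarrow> \<omega> j \<noteq> \<omega> i}
     = (\<integral>\<^sup>+ y. ennreal ((1 - p n y)^(n-1)) \<partial>species_pmf p n)"
    by (rule prob_unique[of p n, OF nonneg sm i])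
  also have "\<dots> \<le> (\<integral>\<^sup>+ y. ennreal (g y) \<partial>species_pmf p n)"
    by (intro nn_integral_mono ennreal_leI pw)
  also have "\<dots> = (\<integral>\<^sup>+ y. ennreal (p n y * g y) \<partial>count_space UNIV)"
    by (simp add: nn_integral_measure_pmf pmf_species[of p n, OF nonneg sm] ennreal_mult nonneg g_def)
  also have "\<dots> = (\<Sum>y. ennreal (p n y * g y))" by (simp add: nn_integral_count_space_nat)
  also have "\<dots> = ennreal (\<Sum>y. p n y * g y)"
    using gs nonneg by (intro suminf_ennreal2) (auto simp: sums_iff g_def)
  also have "(\<Sum>y. p n y * g y) = (\<Sum>\<^sub>\<infinity>k. p n k * g k)" using gs by (simp add: sums_iff)
  also have "(\<Sum>\<^sub>\<infinity>k. p n k * g k) = exp 1 * (\<Sum>\<^sub>\<infinity>k. p n k * exp (- real n * p n k))"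
  proof -
    have "(\<lambda>k. p n k * exp (- real n * p n k)) summable_on UNIV"
    proof (rule dom_summable[of p n, OF nonneg sm, where C=1])
      fix k
      show "0 \<le> p n k * exp (- real n * p n k)" using nonneg by simp
      have "exp (- real n * p n k) \<le> 1" using nonneg by simp
      then show "p n k * exp (- real n * p n k) \<le> 1 * p n k"
        using mult_left_le[of "exp (- real n * p n k)" "p n k"] nonneg by simp
    qed
    then show ?thesis
      by (subst infsum_cmult_right[symmetric]) (auto simp: g_def mult_ac)
  qed
  finally have "emeasure (sample_pmf p n) {\<omega>. \<forall>j<n. j\<noteq>i \<longrightarrow> \<omega> j \<noteq> \<omega> i}
     \<le> ennreal (exp 1 * (\<Sum>\<^sub>\<infinity>k. p n k * exp (- real n * p n k)))" .
  moreover have "0 \<le> exp 1 * (\<Sum>\<^sub>\<infinity>k. p n k * exp (- real n * p n k))"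
    using nonneg by (intro mult_nonneg_nonneg infsum_nonneg) auto
  ultimately show ?thesis
    by (simp add: measure_pmf.emeasure_eq_measure)
qed

lemma F1_le:
  "real (F1 n \<omega>) \<le> (\<Sum>i<n. indicator {\<omega>. \<forall>j<n. j \<noteq> i \<longrightarrow> \<omega> j \<noteq> \<omega> i} \<omega>)"
proof -
  let ?U = "{..<n} \<inter> {i. \<forall>j<n. j \<noteq> i \<longrightarrow> \<omega> j \<noteq> \<omega> i}"
  have sub: "{k. Xcount n \<omega> k = 1} \<subseteq> \<omega> ` ?U"
  proof
    fix k assume "k \<in> {k. Xcount n \<omega> k = 1}"
    then have "card {i \<in> {..<n}. \<omega> i = k} = 1" by (simp add: Xcount_def)
    then obtain i where i: "{i \<in> {..<n}. \<omega> i = k} = {i}" by (auto simp: card_1_singleton_iff)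
    then have "i < n" "\<omega> i = k" by auto
    moreover have "\<forall>j<n. j \<noteq> i \<longrightarrow> \<omega> j \<noteq> \<omega> i" using i \<open>\<omega> i = k\<close> by blast
    ultimately show "k \<in> \<omega> ` ?U" by auto
  qed
  have "F1 n \<omega> \<le> card (\<omega> ` ?U)" unfolding F1_def by (intro card_mono sub) auto
  also have "\<dots> \<le> card ?U" by (intro card_image_le) auto
  finally have "real (F1 n \<omega>) \<le> real (card ?U)" by simp
  also have "real (card ?U) = (\<Sum>i<n. indicator {\<omega>. \<forall>j<n. j \<noteq> i \<longrightarrow> \<omega> j \<noteq> \<omega> i} \<omega>)"
  proof -
    have "real (card ?U) = (\<Sum>i\<in>?U. 1)" by simp
    also have "\<dots> = (\<Sum>i<n. if (\<forall>j<n. j \<noteq> i \<longrightarrow> \<omega> j \<noteq> \<omega> i) then 1 else 0)"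
      by (subst sum.If_cases) (auto intro!: sum.cong)
    finally show ?thesis by (auto simp: indicator_def intro!: sum.cong)
  qed
  finally show ?thesis .
qed

lemma hbound:
  fixes x T :: real
  assumes T: "0 \<le> T" "T \<le> x"
  shows "(x + x^2) * exp (- x) \<le> x * ((1 + T) * exp (- T))"
proof -
  have "1 + (x - T) \<le> exp (x - T)" by (rule exp_ge_add_one_self)
  then have "(1 + T) * (1 + (x - T)) \<le> (1 + T) * exp (x - T)"
    using T by (intro mult_left_mono) auto
  moreover have "T * T \<le> T * x" by (rule mult_left_mono) (use T in auto)
  then have "1 + x \<le> (1 + T) * (1 + (x - T))" using T by (simp add: algebra_simps)
  ultimately have a: "1 + x \<le> (1 + T) * exp (x - T)" by linarith
  have "(1 + x) * exp (- x) \<le> ((1 + T) * exp (x - T)) * exp (- x)"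
    by (rule mult_right_mono[OF a]) simp
  also have "\<dots> = (1 + T) * (exp (x - T) * exp (- x))" by simp
  also have "exp (x - T) * exp (- x) = exp (- T)" by (simp flip: exp_add)
  finally have b: "(1 + x) * exp (- x) \<le> (1 + T) * exp (- T)" .
  have "(x + x^2) * exp (- x) = x * ((1 + x) * exp (- x))" by (simp add: power2_eq_square algebra_simps)
  also have "\<dots> \<le> x * ((1 + T) * exp (- T))" using T b by (intro mult_left_mono) auto
  finally show ?thesis .
qed

lemma hbound0:
  fixes x :: real
  assumes "0 \<le> x"
  shows "(x + x^2) * exp (- x) \<le> x"
  using hbound[of 0 x] assms by simp

lemma EF1_le:
  assumes nonneg: "\<And>k. p n k \<ge> 0" and sm: "(\<lambda>k. p n k) sums 1"
  shows "EF1 p n \<le> exp 1 * sn2 p n"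
proof -
  define U where "U i = {\<omega>::nat\<Rightarrow>nat. \<forall>j<n. j\<noteq>i \<longrightarrow> \<omega> j \<noteq> \<omega> i}" for i
  define B where "B = (\<Sum>\<^sub>\<infinity>k. p n k * exp (- real n * p n k))"
  let ?M = "measure_pmf (sample_pmf p n)"
  have int1: "integrable ?M (\<lambda>\<omega>. indicator (U i) \<omega> :: real)" for i
    by (rule measure_pmf.integrable_const_bound[where B=1]) (auto simp: indicator_def)
  have int2: "integrable ?M (\<lambda>\<omega>. real (F1 n \<omega>))"
  proof (rule measure_pmf.integrable_const_bound[where B="real n"])
    show "AE x in ?M. norm (real (F1 n x)) \<le> real n"
    proof (intro AE_I2)
      fix \<omega>
      have "real (F1 n \<omega>) \<le> (\<Sum>i<n. indicator (U i) \<omega>)" using F1_le[of n \<omega>] by (simp add: U_def)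
      also have "\<dots> \<le> (\<Sum>i<n. 1)" by (intro sum_mono) (auto simp: indicator_def)
      finally show "norm (real (F1 n \<omega>)) \<le> real n" by simp
    qed
  qed simp
  have "EF1 p n \<le> measure_pmf.expectation (sample_pmf p n) (\<lambda>\<omega>. \<Sum>i<n. indicator (U i) \<omega>)"
  proof -
    have int3: "integrable ?M (\<lambda>\<omega>. \<Sum>i<n. indicator (U i) \<omega> :: real)" using int1 by auto
    have pw: "real (F1 n \<omega>) \<le> (\<Sum>i<n. indicator (U i) \<omega>)" for \<omega>
      using F1_le[of n \<omega>] by (simp add: U_def)
    show ?thesis unfolding EF1_def by (intro integral_mono int2 int3 pw)
  qed
  also have "\<dots> = (\<Sum>i<n. measure_pmf.prob (sample_pmf p n) (U i))"
    using int1 by (simp add: integral_sum)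
  also have "\<dots> \<le> (\<Sum>i<n. exp 1 * B)"
    unfolding U_def B_def by (intro sum_mono prob_unique_le[of p n, OF nonneg sm]) simp
  also have "\<dots> = exp 1 * (real n * B)" by simp
  also have "real n * B \<le> sn2 p n"
  proof -
    have s1: "(\<lambda>k. p n k * exp (- real n * p n k)) summable_on UNIV"
    proof (rule dom_summable[of p n, OF nonneg sm, where C=1])
      fix k
      show "0 \<le> p n k * exp (- real n * p n k)" using nonneg by simp
      have "exp (- real n * p n k) \<le> 1" using nonneg by simp
      then show "p n k * exp (- real n * p n k) \<le> 1 * p n k"
        using mult_left_le[of "exp (- real n * p n k)" "p n k"] nonneg by simp
    qed
    have s2: "(\<lambda>k. (real n * p n k + (real n * p n k)^2) * exp (- real n * p n k)) summable_on UNIV"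
    proof (rule dom_summable[of p n, OF nonneg sm, where C="real n"])
      fix k
      show "0 \<le> (real n * p n k + (real n * p n k)^2) * exp (- real n * p n k)" using nonneg by simp
      show "(real n * p n k + (real n * p n k)^2) * exp (- real n * p n k) \<le> real n * p n k"
        using hbound0[of "real n * p n k"] nonneg by simp
    qed
    have "real n * B = (\<Sum>\<^sub>\<infinity>k. real n * (p n k * exp (- real n * p n k)))"
      unfolding B_def by (subst infsum_cmult_right) (use s1 in auto)
    also have "\<dots> \<le> sn2 p n"
      unfolding sn2_def s2_def
    proof (rule infsum_mono)
      show "(\<lambda>k. real n * (p n k * exp (- real n * p n k))) summable_on UNIV"
        using s1 by (rule summable_on_cmult_right)
      show "(\<lambda>k. (real n * p n k + (real n * p n k)^2) * exp (- real n * p n k)) summable_on UNIV"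
        by (rule s2)
      fix k
      show "real n * (p n k * exp (- real n * p n k))
         \<le> (real n * p n k + (real n * p n k)^2) * exp (- real n * p n k)"
        using nonneg[of k] by (simp add: algebra_simps)
    qed
    finally show ?thesis .
  qed
  finally show ?thesis by simp
qed


lemma sum1:
  fixes p :: "nat \<Rightarrow> nat \<Rightarrow> real"
  assumes nonneg: "\<And>k. p n k \<ge> 0" and sm: "(\<lambda>k. p n k) sums 1"
    and l: "0 \<le> lamv" and T: "0 \<le> T" and K: "\<And>k. k \<in> K \<Longrightarrow> T \<le> lamv * p n k"
  shows "(\<Sum>\<^sub>\<infinity>k\<in>K. (lamv * p n k + (lamv * p n k)^2) * exp (- lamv * p n k)) \<le> (1 + T) * exp (- T) * lamv"
    "0 \<le> (\<Sum>\<^sub>\<infinity>k\<in>K. (lamv * p n k + (lamv * p n k)^2) * exp (- lamv * p n k))"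
proof -
  have x0: "0 \<le> lamv * p n k" for k using l nonneg by simp
  have s1: "(\<lambda>k. (lamv * p n k + (lamv * p n k)^2) * exp (- lamv * p n k)) summable_on K"
  proof (rule dom_summable[of p n, OF nonneg sm, where C=lamv])
    fix k
    show "0 \<le> (lamv * p n k + (lamv * p n k)^2) * exp (- lamv * p n k)" using x0[of k] by simp
    show "(lamv * p n k + (lamv * p n k)^2) * exp (- lamv * p n k) \<le> lamv * p n k"
      using hbound0[OF x0[of k]] by simp
  qed
  have s2: "(\<lambda>k. ((1 + T) * exp (- T) * lamv) * p n k) summable_on K"
    by (intro summable_on_cmult_right summable_on_subset_banach[OF p_summable(1)[of p n, OF nonneg sm]]) auto
  have "(\<Sum>\<^sub>\<infinity>k\<in>K. (lamv * p n k + (lamv * p n k)^2) * exp (- lamv * p n k))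
      \<le> (\<Sum>\<^sub>\<infinity>k\<in>K. ((1 + T) * exp (- T) * lamv) * p n k)"
  proof (rule infsum_mono[OF s1 s2])
    fix k assume "k \<in> K"
    then show "(lamv * p n k + (lamv * p n k)^2) * exp (- lamv * p n k) \<le> ((1 + T) * exp (- T) * lamv) * p n k"
      using hbound[OF T K] by (simp add: mult_ac)
  qed
  also have "\<dots> = ((1 + T) * exp (- T) * lamv) * (\<Sum>\<^sub>\<infinity>k\<in>K. p n k)"
    by (rule infsum_cmult_right) (intro summable_on_subset_banach[OF p_summable(1)[of p n, OF nonneg sm]], auto)
  also have "(\<Sum>\<^sub>\<infinity>k\<in>K. p n k) \<le> 1"
  proof -
    have "(\<Sum>\<^sub>\<infinity>k\<in>K. p n k) \<le> (\<Sum>\<^sub>\<infinity>k\<in>UNIV. p n k)"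
      by (rule infsum_mono_neutral) (auto intro: nonneg summable_on_subset_banach[OF p_summable(1)[of p n, OF nonneg sm]] p_summable(1)[of p n, OF nonneg sm])
    then show ?thesis using p_summable(2)[of p n, OF nonneg sm] by simp
  qed
  then have "((1 + T) * exp (- T) * lamv) * (\<Sum>\<^sub>\<infinity>k\<in>K. p n k) \<le> ((1 + T) * exp (- T) * lamv) * 1"
    using T l by (intro mult_left_mono) auto
  finally show "(\<Sum>\<^sub>\<infinity>k\<in>K. (lamv * p n k + (lamv * p n k)^2) * exp (- lamv * p n k)) \<le> (1 + T) * exp (- T) * lamv"
    by simp
  show "0 \<le> (\<Sum>\<^sub>\<infinity>k\<in>K. (lamv * p n k + (lamv * p n k)^2) * exp (- lamv * p n k))"
    by (intro infsum_nonneg) (use x0 in auto)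
qed

lemma sum2:
  fixes p :: "nat \<Rightarrow> nat \<Rightarrow> real"
  assumes nonneg: "\<And>k. p n k \<ge> 0" and sm: "(\<lambda>k. p n k) sums 1"
    and l: "0 \<le> lamv" and T: "0 \<le> T"
  shows "(\<Sum>\<^sub>\<infinity>k. (lamv * p n k)^2 * exp (- lamv * p n k) * (if lamv * p n k > T then 1 else 0)) \<le> (1 + T) * exp (- T) * lamv"
    "0 \<le> (\<Sum>\<^sub>\<infinity>k. (lamv * p n k)^2 * exp (- lamv * p n k) * (if lamv * p n k > T then 1 else 0))"
proof -
  let ?K = "{k. lamv * p n k > T}"
  have x0: "0 \<le> lamv * p n k" for k using l nonneg by simp
  have eq: "(\<Sum>\<^sub>\<infinity>k. (lamv * p n k)^2 * exp (- lamv * p n k) * (if lamv * p n k > T then 1 else 0))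
     = (\<Sum>\<^sub>\<infinity>k\<in>?K. (lamv * p n k)^2 * exp (- lamv * p n k))"
    by (rule infsum_cong_neutral) auto
  have sa: "(\<lambda>k. (lamv * p n k)^2 * exp (- lamv * p n k)) summable_on ?K"
  proof (rule dom_summable[of p n, OF nonneg sm, where C=lamv])
    fix k
    show "0 \<le> (lamv * p n k)^2 * exp (- lamv * p n k)" by simp
    have "(lamv * p n k)^2 * exp (- lamv * p n k) \<le> (lamv * p n k + (lamv * p n k)^2) * exp (- lamv * p n k)"
      using x0[of k] by (intro mult_right_mono) auto
    also have "\<dots> \<le> lamv * p n k" using hbound0[OF x0[of k]] by simp
    finally show "(lamv * p n k)^2 * exp (- lamv * p n k) \<le> lamv * p n k" .
  qed
  have sb: "(\<lambda>k. (lamv * p n k + (lamv * p n k)^2) * exp (- lamv * p n k)) summable_on ?K"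
  proof (rule dom_summable[of p n, OF nonneg sm, where C=lamv])
    fix k
    show "0 \<le> (lamv * p n k + (lamv * p n k)^2) * exp (- lamv * p n k)" using x0[of k] by simp
    show "(lamv * p n k + (lamv * p n k)^2) * exp (- lamv * p n k) \<le> lamv * p n k"
      using hbound0[OF x0[of k]] by simp
  qed
  have "(\<Sum>\<^sub>\<infinity>k\<in>?K. (lamv * p n k)^2 * exp (- lamv * p n k))
     \<le> (\<Sum>\<^sub>\<infinity>k\<in>?K. (lamv * p n k + (lamv * p n k)^2) * exp (- lamv * p n k))"
    by (rule infsum_mono[OF sa sb]) (use x0 in \<open>auto intro!: mult_right_mono\<close>)
  also have "\<dots> \<le> (1 + T) * exp (- T) * lamv"
    by (rule sum1(1)[of p n, OF nonneg sm l T]) auto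
  finally show "(\<Sum>\<^sub>\<infinity>k. (lamv * p n k)^2 * exp (- lamv * p n k) * (if lamv * p n k > T then 1 else 0)) \<le> (1 + T) * exp (- T) * lamv"
    using eq by simp
  show "0 \<le> (\<Sum>\<^sub>\<infinity>k. (lamv * p n k)^2 * exp (- lamv * p n k) * (if lamv * p n k > T then 1 else 0))"
    by (intro infsum_nonneg) auto
qed

theorem lemma3p1:
  fixes p :: "nat \<Rightarrow> nat \<Rightarrow> real" and a :: "real \<Rightarrow> real"
  assumes p_nonneg: "\<And>n k. n \<ge> 1 \<Longrightarrow> p n k \<ge> 0"
    and p_sum: "\<And>n. n \<ge> 1 \<Longrightarrow> (\<lambda>k. p n k) sums 1"
    and a_ge: "\<And>t. t \<ge> 0 \<Longrightarrow> a t \<ge> 1"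
    and a_sqrt: "filterlim (\<lambda>t. a t / sqrt t) at_top at_top"
    and a_lin: "((\<lambda>t. a t / t) \<longlongrightarrow> 0) at_top"
    and c1: "\<exists>c1. (\<lambda>n. EF1 p n / real n) \<longlonglongrightarrow> c1 \<and> 0 < c1 \<and> c1 < 1"
  shows "\<forall>lam :: nat \<Rightarrow> real. (\<forall>n. lam n > 0) \<and> (\<lambda>n. lam n / real n) \<longlonglongrightarrow> 1 \<longrightarrow>
      ((\<lambda>L. limsup (\<lambda>n. ereal (1 / real n *
          (\<Sum>\<^sub>\<infinity>k\<in>{k. real n * p n k > L}.
             (lam n * p n k + (lam n * p n k)^2) * exp (- lam n * p n k)))))
        \<longlongrightarrow> 0) at_top
      \<and> (\<forall>\<epsilon>>0. (\<lambda>n. 1 / sn2 p n *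
          (\<Sum>\<^sub>\<infinity>k. (lam n * p n k)^2 * exp (- lam n * p n k) *
             (if lam n * p n k > \<epsilon> * sn2 p n / a (sn2 p n) then 1 else 0)))
        \<longlonglongrightarrow> 0)"
proof (intro allI impI)
  fix lam :: "nat \<Rightarrow> real"
  assume lamH: "(\<forall>n. lam n > 0) \<and> (\<lambda>n. lam n / real n) \<longlonglongrightarrow> 1"
  then have lpos: "\<And>n. lam n > 0" and llim: "(\<lambda>n. lam n / real n) \<longlonglongrightarrow> 1" by auto
  define h where "h T = (1 + T) * exp (- T)" for T :: real
  have h0: "(h \<longlongrightarrow> 0) at_top"
  proof -
    have "((\<lambda>T::real. T^1 / exp T + T^0 / exp T) \<longlongrightarrow> 0 + 0) at_top"
      by (intro tendsto_add tendsto_power_div_exp_0)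
    moreover have "(\<lambda>T::real. T^1 / exp T + T^0 / exp T) = h"
      by (rule ext) (simp add: h_def exp_minus field_simps)
    ultimately show ?thesis by simp
  qed
  have hnn: "0 \<le> h T" if "0 \<le> T" for T using that by (simp add: h_def)
  have ev: "eventually (\<lambda>n. 1 \<le> n \<and> lam n \<le> 2 * real n \<and> real n / 2 \<le> lam n) sequentially"
  proof -
    have e1: "eventually (\<lambda>n. lam n / real n < 2) sequentially"
      using order_tendstoD(2)[OF llim, of 2] by simp
    have e2: "eventually (\<lambda>n. lam n / real n > 1/2) sequentially"
      using order_tendstoD(1)[OF llim, of "1/2"] by simp
    show ?thesis using e1 e2 eventually_ge_at_top[of 1]
    proof eventually_elim
      case (elim n)
      then have np: "real n > 0" by simp
      from elim np show ?case by (auto simp: field_simps)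
    qed
  qed
  show "((\<lambda>L. limsup (\<lambda>n. ereal (1 / real n *
          (\<Sum>\<^sub>\<infinity>k\<in>{k. real n * p n k > L}.
             (lam n * p n k + (lam n * p n k)^2) * exp (- lam n * p n k)))))
        \<longlongrightarrow> 0) at_top
      \<and> (\<forall>\<epsilon>>0. (\<lambda>n. 1 / sn2 p n *
          (\<Sum>\<^sub>\<infinity>k. (lam n * p n k)^2 * exp (- lam n * p n k) *
             (if lam n * p n k > \<epsilon> * sn2 p n / a (sn2 p n) then 1 else 0)))
        \<longlonglongrightarrow> 0)"
  proof
    define X where "X L n = 1 / real n *
          (\<Sum>\<^sub>\<infinity>k\<in>{k. real n * p n k > L}.
             (lam n * p n k + (lam n * p n k)^2) * exp (- lam n * p n k))" for L n
    have bnd: "eventually (\<lambda>n. 0 \<le> X L n \<and> X L n \<le> 2 * h (L/2)) sequentially" if L: "0 \<le> L" for L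
      using ev
    proof eventually_elim
      case (elim n)
      then have n1: "1 \<le> n" and l2: "lam n \<le> 2 * real n" and l3: "real n / 2 \<le> lam n" by auto
      have nonneg: "\<And>k. p n k \<ge> 0" using p_nonneg n1 by auto
      have sm: "(\<lambda>k. p n k) sums 1" using p_sum n1 by auto
      have K: "L / 2 \<le> lam n * p n k" if "k \<in> {k. real n * p n k > L}" for k
      proof -
        have "(real n / 2) * p n k \<le> lam n * p n k" by (rule mult_right_mono[OF l3 nonneg])
        then show ?thesis using that by simp
      qed
      note S = sum1[of p n, OF nonneg sm less_imp_le[OF lpos[of n]], of "L/2" "{k. real n * p n k > L}"]
      have up: "(\<Sum>\<^sub>\<infinity>k\<in>{k. real n * p n k > L}. (lam n * p n k + (lam n * p n k)^2) * exp (- lam n * p n k))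
          \<le> h (L/2) * lam n"
        using S(1) K L by (simp add: h_def)
      have lo: "0 \<le> (\<Sum>\<^sub>\<infinity>k\<in>{k. real n * p n k > L}. (lam n * p n k + (lam n * p n k)^2) * exp (- lam n * p n k))"
        using S(2) K L by simp
      have "h (L/2) * lam n \<le> h (L/2) * (2 * real n)"
        by (rule mult_left_mono[OF l2 hnn]) (use L in simp)
      with up have up2: "(\<Sum>\<^sub>\<infinity>k\<in>{k. real n * p n k > L}. (lam n * p n k + (lam n * p n k)^2) * exp (- lam n * p n k))
          \<le> 2 * h (L/2) * real n" by simp
      have np: "real n > 0" using n1 by simp
      show ?case unfolding X_def using lo up2 np by (simp add: field_simps)
    qed
    have lb: "eventually (\<lambda>L. 0 \<le> limsup (\<lambda>n. ereal (X L n))) at_top"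
      using eventually_ge_at_top[of "0::real"]
    proof eventually_elim
      case (elim L)
      show ?case
        by (rule le_Limsup[OF trivial_limit_sequentially]) (use bnd[OF elim] in \<open>auto elim: eventually_mono\<close>)
    qed
    have ub: "eventually (\<lambda>L. limsup (\<lambda>n. ereal (X L n)) \<le> ereal (2 * h (L/2))) at_top"
      using eventually_ge_at_top[of "0::real"]
    proof eventually_elim
      case (elim L)
      show ?case
        by (rule Limsup_bounded) (use bnd[OF elim] in \<open>auto elim: eventually_mono\<close>)
    qed
    have half: "filterlim (\<lambda>L::real. L / 2) at_top at_top"
    proof -
      have "filterlim (\<lambda>L::real. (1/2) * L) at_top at_top"
        by (rule filterlim_tendsto_pos_mult_at_top[OF tendsto_const _ filterlim_ident]) simp
      then show ?thesis by simp
    qed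
    have "((\<lambda>L. ereal (2 * h (L/2))) \<longlongrightarrow> ereal (2 * 0)) at_top"
      by (intro tendsto_ereal tendsto_mult_left filterlim_compose[OF h0 half])
    then have g0: "((\<lambda>L. ereal (2 * h (L/2))) \<longlongrightarrow> 0) at_top" by (simp add: zero_ereal_def)
    have "((\<lambda>L. limsup (\<lambda>n. ereal (X L n))) \<longlongrightarrow> 0) at_top"
      by (rule tendsto_sandwich[OF lb ub tendsto_const g0])
    then show "((\<lambda>L. limsup (\<lambda>n. ereal (1 / real n *
          (\<Sum>\<^sub>\<infinity>k\<in>{k. real n * p n k > L}.
             (lam n * p n k + (lam n * p n k)^2) * exp (- lam n * p n k)))))
        \<longlongrightarrow> 0) at_top" by (simp add: X_def)
  next
    show "\<forall>\<epsilon>>0. (\<lambda>n. 1 / sn2 p n *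
          (\<Sum>\<^sub>\<infinity>k. (lam n * p n k)^2 * exp (- lam n * p n k) *
             (if lam n * p n k > \<epsilon> * sn2 p n / a (sn2 p n) then 1 else 0)))
        \<longlonglongrightarrow> 0"
    proof (intro allI impI)
      fix \<epsilon> :: real assume eps: "\<epsilon> > 0"
      obtain c1 where c1: "(\<lambda>n. EF1 p n / real n) \<longlonglongrightarrow> c1" "0 < c1" using c1 by blast
      define c where "c = c1 / (2 * exp 1)"
      have cpos: "c > 0" using c1 by (simp add: c_def)
      define s where "s n = sn2 p n" for n
      have ef_ev: "eventually (\<lambda>n. EF1 p n / real n > c1/2) sequentially"
        using order_tendstoD(1)[OF c1(1), of "c1/2"] c1(2) by simp
      have evs: "eventually (\<lambda>n. 1 \<le> n \<and> lam n \<le> 2 * real n \<and> c * real n \<le> s n) sequentially"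
        using ev ef_ev
      proof eventually_elim
        case (elim n)
        then have n1: "1 \<le> n" and l2: "lam n \<le> 2 * real n" and ef: "EF1 p n / real n > c1 / 2" by auto
        have nonneg: "\<And>k. p n k \<ge> 0" using p_nonneg n1 by auto
        have sm: "(\<lambda>k. p n k) sums 1" using p_sum n1 by auto
        have np: "real n > 0" using n1 by simp
        have "c1 / 2 * real n < EF1 p n" using ef np by (simp add: field_simps)
        also have "\<dots> \<le> exp 1 * s n" using EF1_le[of p n, OF nonneg sm] by (simp add: s_def)
        finally have "c1 / 2 * real n < exp 1 * s n" .
        then have "c * real n \<le> s n" by (simp add: c_def field_simps)
        with n1 l2 show ?case by simp
      qed
      have stop: "filterlim s at_top sequentially"
      proof (rule filterlim_at_top_mono)
        show "filterlim (\<lambda>n. c * real n) at_top sequentially"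
          by (rule filterlim_tendsto_pos_mult_at_top[OF tendsto_const cpos filterlim_real_sequentially])
        show "eventually (\<lambda>n. c * real n \<le> s n) sequentially" using evs by (auto elim: eventually_mono)
      qed
      have r0: "((\<lambda>n. a (s n) / s n) \<longlongrightarrow> 0) sequentially"
        by (rule filterlim_compose[OF a_lin stop])
      have spos: "eventually (\<lambda>n. s n > 0) sequentially"
        using evs
      proof eventually_elim
        case (elim n) then have "c * real n > 0" using cpos by simp
        with elim show ?case by linarith
      qed
      have rpos: "eventually (\<lambda>n. 0 < a (s n) / s n) sequentially"
        using spos
      proof eventually_elim
        case (elim n) then have "a (s n) \<ge> 1" using a_ge by auto
        with elim show ?case by simp
      qed
      define T where "T n = \<epsilon> * s n / a (s n)" for n
      have Ttop: "filterlim T at_top sequentially"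
      proof -
        have "filterlim (\<lambda>n. inverse (a (s n) / s n)) at_top sequentially"
          by (rule filterlim_inverse_at_top[OF r0 rpos])
        then have "filterlim (\<lambda>n. \<epsilon> * inverse (a (s n) / s n)) at_top sequentially"
          by (rule filterlim_tendsto_pos_mult_at_top[OF tendsto_const eps])
        moreover have "(\<lambda>n. \<epsilon> * inverse (a (s n) / s n)) = T"
          by (rule ext) (simp add: T_def field_simps)
        ultimately show ?thesis by simp
      qed
      have hT: "((\<lambda>n. (2 / c) * h (T n)) \<longlongrightarrow> (2 / c) * 0) sequentially"
        by (intro tendsto_mult_left filterlim_compose[OF h0 Ttop])
      have T0: "eventually (\<lambda>n. 0 \<le> T n) sequentially"
        using Ttop by (simp add: filterlim_at_top)
      define Y where "Y n = 1 / sn2 p n *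
          (\<Sum>\<^sub>\<infinity>k. (lam n * p n k)^2 * exp (- lam n * p n k) *
             (if lam n * p n k > \<epsilon> * sn2 p n / a (sn2 p n) then 1 else 0))" for n
      have bY: "eventually (\<lambda>n. 0 \<le> Y n \<and> Y n \<le> (2 / c) * h (T n)) sequentially"
        using evs T0 spos
      proof eventually_elim
        case (elim n)
        then have n1: "1 \<le> n" and l2: "lam n \<le> 2 * real n" and cs: "c * real n \<le> s n"
          and Tn: "0 \<le> T n" and sp: "s n > 0" by auto
        have nonneg: "\<And>k. p n k \<ge> 0" using p_nonneg n1 by auto
        have sm: "(\<lambda>k. p n k) sums 1" using p_sum n1 by auto
        note S = sum2[of p n, OF nonneg sm less_imp_le[OF lpos[of n]] Tn]
        let ?Z = "(\<Sum>\<^sub>\<infinity>k. (lam n * p n k)^2 * exp (- lam n * p n k) *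
             (if lam n * p n k > \<epsilon> * sn2 p n / a (sn2 p n) then 1 else 0))"
        have Zu: "?Z \<le> h (T n) * lam n" using S(1) by (simp add: h_def T_def s_def)
        have Zl: "0 \<le> ?Z" using S(2) by (simp add: T_def s_def)
        have "h (T n) * lam n \<le> h (T n) * (2 * real n)"
          by (rule mult_left_mono[OF l2 hnn[OF Tn]])
        also have "2 * real n \<le> (2 / c) * s n" using cs cpos by (simp add: field_simps)
        then have "h (T n) * (2 * real n) \<le> h (T n) * ((2 / c) * s n)"
          by (rule mult_left_mono) (rule hnn[OF Tn])
        finally have "?Z \<le> ((2 / c) * h (T n)) * s n" using Zu by (simp add: mult_ac)
        then have up: "?Z / s n \<le> (2 / c) * h (T n)" using sp by (simp add: divide_le_eq)
        show ?case unfolding Y_def using up Zl sp by (simp add: s_def)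
      qed
      have "Y \<longlonglongrightarrow> 0"
        by (rule tendsto_sandwich[OF _ _ tendsto_const hT[simplified]])
           (use bY in \<open>auto elim: eventually_mono\<close>)
      then show "(\<lambda>n. 1 / sn2 p n *
          (\<Sum>\<^sub>\<infinity>k. (lam n * p n k)^2 * exp (- lam n * p n k) *
             (if lam n * p n k > \<epsilon> * sn2 p n / a (sn2 p n) then 1 else 0)))
        \<longlonglongrightarrow> 0" unfolding Y_def[abs_def] .

    qed
  qed
qed

end
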